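(* Let $C$ be a convex chain with endpoints $p$ and $q$. If $C$ is contained in $D(p,q)$, then the stretch factor of $C$ is at most $\frac{\pi}{2}$.
   Context: A chain is a sequence of points $p=c_1,\dots,c_m=q$ together with the segments $c_ic_{i+1}$; it is convex if the polygon $c_1c_2\cdots c_m$ is convex (the points are in convex position and appear in this cyclic order on their convex hull). $D(p,q)$ is the closed disk having the segment $pq$ as a diameter. The stretch factor of the chain is the smallest $t$ such that for any two vertices $u,v$ of $C$, the length of the sub-chain of $C$ between $u$ and $v$ is at most $t|uv|$. *)

theory Defs
  imports "HOL-Analysis.Analysis"
begin

type_synonym point = "real \<times> real"

definition cross :: "point \<Rightarrow> point \<Rightarrow> real" where
  "cross u v = fst u * snd v - snd u * fst v"

text \<open>It is convex if the
  polygon c 0 c 1 ... c (m-1) is convex: the points are in convex position and appear in this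
  cyclic order on their convex hull, i.e. for a fixed orientation s, every vertex other than the
  endpoints of an edge c i c ((i+1) mod m) lies strictly on the same side of that edge.\<close>
definition convex_chain :: "(nat \<Rightarrow> point) \<Rightarrow> nat \<Rightarrow> bool" where
  "convex_chain c m \<longleftrightarrow> 2 \<le> m \<and> inj_on c {..<m} \<and>
     (\<exists>s::real. (s = 1 \<or> s = -1) \<and>
        (\<forall>i<m. \<forall>j<m. j \<noteq> i \<and> j \<noteq> Suc i mod m \<longrightarrow>
           s * cross (c (Suc i mod m) - c i) (c j - c i) > 0))"

definition chain_set :: "(nat \<Rightarrow> point) \<Rightarrow> nat \<Rightarrow> point set" where
  "chain_set c m = (\<Union>i\<in>{..<m - 1}. closed_segment (c i) (c (Suc i)))"

definition subchain_length :: "(nat \<Rightarrow> point) \<Rightarrow> nat \<Rightarrow> nat \<Rightarrow> real" where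
  "subchain_length c i j = (\<Sum>k\<in>{i..<j}. dist (c k) (c (Suc k)))"

definition diam_disk :: "point \<Rightarrow> point \<Rightarrow> point set" where
  "diam_disk p q = cball (midpoint p q) (dist p q / 2)"

definition stretch_factor :: "(nat \<Rightarrow> point) \<Rightarrow> nat \<Rightarrow> real" where
  "stretch_factor c m = Inf {t. \<forall>i j. i < j \<and> j < m \<longrightarrow>
       subchain_length c i j \<le> t * dist (c i) (c j)}"

end

theory Submission
  imports Defs
begin


lemma cross_cyc: "cross (b - a) (c - a) = cross (c - b) (a - b)"
  by (simp add: cross_def algebra_simps)

lemma cross_shift: "cross (b - a) (c - a) = cross (b - a) (c - b)"
  by (simp add: cross_def algebra_simps)

lemma cross_self [simp]: "cross u u = 0"
  by (simp add: cross_def)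

lemma cross_swap: "cross u v = - cross v u"
  by (simp add: cross_def)

lemma cross_scale: "cross (a *\<^sub>R u) (b *\<^sub>R v) = a * b * cross u v"
  by (simp add: cross_def algebra_simps)

lemma inner_pt: "inner (u::point) v = fst u * fst v + snd u * snd v"
  by (cases u; cases v) simp

lemma pos_cancel: "0 < a * b \<Longrightarrow> 0 < b \<Longrightarrow> 0 < (a::real)"
  by (metis mult_nonpos_nonneg not_le less_imp_le)

lemma cross_trans:
  assumes "s * cross d u \<ge> 0" "s * cross d w > 0" "s * cross d z > 0"
    "s * cross u w > 0" "s * cross w z > 0"
  shows "s * cross u z > 0"
proof -
  have id: "(s * cross u z) * (s * cross d w) = (s * cross u w) * (s * cross d z) + (s * cross w z) * (s * cross d u)"
    by (simp add: cross_def algebra_simps)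
  have "(s * cross u w) * (s * cross d z) > 0" using assms by simp
  moreover have "(s * cross w z) * (s * cross d u) \<ge> 0" using assms by simp
  ultimately have "(s * cross u z) * (s * cross d w) > 0" using id by linarith
  with assms(2) show ?thesis by (metis pos_cancel)
qed

lemma obtuse_step:
  assumes "s * s = 1" "inner u w \<le> 0" "s * cross u w > 0" "s * cross v u \<ge> 0" "s * cross v w > 0"
  shows "inner v w \<le> 0"
proof -
  have id1: "inner v u * (s * cross u w) = (s * cross v w) * inner u u + (s * cross u v) * inner u w"
    by (simp add: cross_def inner_pt algebra_simps)
  have uu: "inner u u > 0"
  proof -
    have "u \<noteq> 0" using assms(3) by (auto simp: cross_def)
    thus ?thesis by simp
  qed
  have "s * cross u v \<le> 0" using assms(4) cross_swap[of v u] by simp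
  hence "(s * cross u v) * inner u w \<ge> 0" using assms(2) by (simp add: mult_nonpos_nonpos)
  moreover have "(s * cross v w) * inner u u > 0" using assms uu by simp
  ultimately have "inner v u * (s * cross u w) > 0" using id1 by linarith
  hence vu: "inner v u > 0" using assms(3) by (metis pos_cancel)
  have id2: "inner u u * inner v w = inner v u * inner u w + (s * cross u v) * (s * cross u w)"
  proof -
    have a: "inner u u * inner v w = inner v u * inner u w + cross u v * cross u w"
      by (simp add: cross_def inner_pt algebra_simps)
    have b: "(s * cross u v) * (s * cross u w) = (s * s) * (cross u v * cross u w)"
      by (simp add: algebra_simps)
    show ?thesis using a b assms(1) by simp
  qed
  have "inner v u * inner u w \<le> 0" using vu assms(2) by (simp add: mult_nonneg_nonpos)
  moreover have "(s * cross u v) * (s * cross u w) \<le> 0"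
    using \<open>s * cross u v \<le> 0\<close> assms(3) by (simp add: mult_nonpos_nonneg)
  ultimately have "inner u u * inner v w \<le> 0" using id2 by linarith
  with uu show ?thesis by (meson not_le mult_pos_pos)
qed

lemma edge':
  assumes E: "\<forall>i<m. \<forall>j<m. j \<noteq> i \<and> j \<noteq> Suc i mod m \<longrightarrow> s * cross (c (Suc i mod m) - c i) (c j - c i) > 0"
    and "Suc a < m" "j < m" "j \<noteq> a" "j \<noteq> Suc a"
  shows "s * cross (c (Suc a) - c a) (c j - c a) > 0"
proof -
  have "Suc a mod m = Suc a" using assms(2) by simp
  moreover have "a < m" using assms(2) by simp
  ultimately show ?thesis using E assms(3-5) by metis
qed

lemma orient_base:
  assumes E: "\<forall>i<m. \<forall>j<m. j \<noteq> i \<and> j \<noteq> Suc i mod m \<longrightarrow> s * cross (c (Suc i mod m) - c i) (c j - c i) > 0"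
    and "a < b" "Suc b < m"
  shows "s * cross (c b - c a) (c (Suc b) - c a) > 0"
  using edge'[OF E, of b a] assms(2,3) cross_cyc[of "c b" "c a" "c (Suc b)"] by simp

lemma orient3:
  assumes E: "\<forall>i<m. \<forall>j<m. j \<noteq> i \<and> j \<noteq> Suc i mod m \<longrightarrow> s * cross (c (Suc i mod m) - c i) (c j - c i) > 0"
    and "a < b" "b < k" "k < m"
  shows "s * cross (c b - c a) (c k - c a) > 0"
  using assms(3,4)
proof (induction k)
  case 0 then show ?case by simp
next
  case (Suc n)
  show ?case
  proof (cases "n = b")
    case True
    then show ?thesis using orient_base[OF E, of a b] Suc.prems assms(2) by simp
  next
    case False
    hence bn: "b < n" using Suc.prems by simp
    have IH: "s * cross (c b - c a) (c n - c a) > 0" using Suc.IH bn Suc.prems by simp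
    have wz: "s * cross (c n - c a) (c (Suc n) - c a) > 0"
      using orient_base[OF E, of a n] bn assms(2) Suc.prems by simp
    have du: "s * cross (c (Suc a) - c a) (c b - c a) \<ge> 0"
    proof (cases "b = Suc a")
      case True then show ?thesis by simp
    next
      case False
      then show ?thesis using edge'[OF E, of a b] assms(2) bn Suc.prems by simp
    qed
    have dw: "s * cross (c (Suc a) - c a) (c n - c a) > 0"
      using edge'[OF E, of a n] assms(2) bn Suc.prems by simp
    have dz: "s * cross (c (Suc a) - c a) (c (Suc n) - c a) > 0"
      using edge'[OF E, of a "Suc n"] assms(2) bn Suc.prems by simp
    show ?thesis using cross_trans[OF du dw dz IH wz] .
  qed
qed

lemma obtuse_all:
  assumes E: "\<forall>i<m. \<forall>j<m. j \<noteq> i \<and> j \<noteq> Suc i mod m \<longrightarrow> s * cross (c (Suc i mod m) - c i) (c j - c i) > 0"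
    and ss: "s * s = 1"
    and D: "\<And>k. 0 < k \<Longrightarrow> k < m - 1 \<Longrightarrow> inner (c 0 - c k) (c (m - 1) - c k) \<le> 0"
    and "a < k" "k < b" "b < m"
  shows "inner (c a - c k) (c b - c k) \<le> 0"
proof -
  define A where "A = c a - c k"
  define B where "B = c b - c k"
  define P where "P = c 0 - c k"
  define Q where "Q = c (m - 1) - c k"
  have QP: "s * cross Q P > 0"
    using orient3[OF E, of 0 k "m - 1"] assms(4-6) cross_cyc[of "c k" "c 0" "c (m - 1)"]
    unfolding Q_def P_def by simp
  have BQ: "s * cross B Q \<ge> 0"
  proof (cases "b = m - 1")
    case True then show ?thesis unfolding B_def Q_def by simp
  next
    case False
    hence "b < m - 1" using assms(6) by simp
    then show ?thesis using orient3[OF E, of k b "m - 1"] assms(4-6)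
      unfolding B_def Q_def by simp
  qed
  have BP: "s * cross B P > 0"
    using orient3[OF E, of 0 k b] assms(4-6) cross_cyc[of "c k" "c 0" "c b"]
    unfolding B_def P_def by simp
  have PA: "s * cross P A \<ge> 0"
  proof (cases "a = 0")
    case True then show ?thesis unfolding A_def P_def by simp
  next
    case False then show ?thesis using orient3[OF E, of 0 a k] assms(4-6)
        cross_cyc[of "c a" "c 0" "c k"] cross_cyc[of "c k" "c a" "c 0"]
      unfolding A_def P_def by simp
  qed
  have BA: "s * cross B A > 0"
    using orient3[OF E, of a k b] assms(4-6) cross_cyc[of "c k" "c a" "c b"]
    unfolding B_def A_def by simp
  have PQ: "inner Q P \<le> 0" using D[of k] assms(4-6) unfolding P_def Q_def
    by (simp add: inner_commute)
  have BP': "inner B P \<le> 0" using obtuse_step[OF ss PQ QP BQ BP] .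
  have "inner A B \<le> 0"
    apply (rule obtuse_step[of "-s" P B A])
    using ss BP' BP PA BA cross_swap[of P B] cross_swap[of A P] cross_swap[of A B]
    by (auto simp: inner_commute)
  then show ?thesis unfolding A_def B_def .
qed

lemma mid_ident: "inner ((p::point) - x) (q - x) = (norm (x - midpoint p q))^2 - (dist p q)^2 / 4"
  unfolding dist_norm power2_norm_eq_inner
  by (simp add: inner_pt midpoint_def algebra_simps field_simps)

lemma decomp_norm: "(inner (w::point) e)^2 + (inner w (-snd e, fst e))^2 = inner w w * inner e e"
  by (cases w; cases e) (simp add: power2_eq_square algebra_simps inner_real_def)

lemma decomp_cross: "inner (w::point) e * inner w' (-snd e, fst e) - inner w (-snd e, fst e) * inner w' e = cross w w' * inner e e"
  by (cases w; cases w'; cases e) (simp add: cross_def algebra_simps inner_real_def)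

lemma chord_arc: "(cos (a::real) - cos b)^2 + (sin a - sin b)^2 \<le> (a - b)^2"
proof -
  have "(cos a - cos b)^2 + (sin a - sin b)^2 = 2 - 2 * cos (a - b)"
    by (simp add: cos_diff power2_eq_square algebra_simps)
  also have "cos (a - b) = cos (2 * ((a - b)/2))" by (simp only: mult_2 field_sum_of_halves)
  also have "\<dots> = 1 - 2 * sin ((a - b)/2) ^ 2"
    using cos_double_sin[of "(a - b)/2"] by simp
  also have "sin ((a - b)/2) ^ 2 \<le> ((a - b)/2)^2"
    using abs_sin_x_le_abs_x[of "(a-b)/2"] by (metis abs_ge_zero power2_abs power_mono)
  hence "2 - 2 * (1 - 2 * sin ((a - b)/2) ^ 2) \<le> (a - b)^2"
    by (simp add: power2_eq_square field_simps)
  finally show ?thesis .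
qed

lemma proj_mono:
  assumes O: "\<And>a k b. a < k \<Longrightarrow> k < b \<Longrightarrow> b < m \<Longrightarrow> inner (c a - c k) (c b - c k) \<le> 0"
    and "i \<le> k" "Suc k \<le> j" "j < m"
  shows "inner (c (Suc k) - c k) (c j - c i) \<ge> 0"
proof -
  define w where "w = c k"
  define z where "z = c (Suc k)"
  define u where "u = c i"
  define v where "v = c j"
  have id: "inner (z - w) (v - u) = inner (z - w) (z - w) - inner (w - z) (v - z) - inner (u - w) (z - w)"
    by (simp add: inner_diff_left inner_diff_right inner_commute algebra_simps)
  have 1: "inner (w - z) (v - z) \<le> 0"
  proof (cases "Suc k = j")
    case True then show ?thesis unfolding v_def z_def by simp
  next
    case False then show ?thesis using O[of k "Suc k" j] assms unfolding w_def z_def v_def by simp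
  qed
  have 2: "inner (u - w) (z - w) \<le> 0"
  proof (cases "i = k")
    case True then show ?thesis unfolding u_def w_def by simp
  next
    case False then show ?thesis using O[of i k "Suc k"] assms unfolding w_def z_def u_def by simp
  qed
  have "inner (z - w) (z - w) \<ge> 0" by simp
  with id 1 2 show ?thesis unfolding w_def z_def u_def v_def by linarith
qed



lemma main_bound:
  assumes E: "\<forall>i<m. \<forall>j<m. j \<noteq> i \<and> j \<noteq> Suc i mod m \<longrightarrow> s * cross (c (Suc i mod m) - c i) (c j - c i) > 0"
    and ss: "s * s = 1" and inj: "inj_on c {..<m}"
    and O: "\<And>a k b. a < k \<Longrightarrow> k < b \<Longrightarrow> b < m \<Longrightarrow> inner (c a - c k) (c b - c k) \<le> 0"
    and ij: "i < j" and jm: "j < m"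
  shows "subchain_length c i j \<le> pi / 2 * dist (c i) (c j)"
proof -
  define u where "u = c i"
  define v where "v = c j"
  define D where "D = dist u v"
  have uv: "u \<noteq> v" using inj ij jm unfolding u_def v_def inj_on_def by (metis lessThan_iff order.strict_trans less_irrefl)
  hence Dpos: "D > 0" unfolding D_def by simp
  define r where "r = D / 2"
  define ctr where "ctr = midpoint u v"
  define e where "e = (1 / D) *\<^sub>R (v - u)"
  define ep where "ep = (- snd e, fst e)"
  have "D = norm (v - u)" by (simp add: D_def dist_norm norm_minus_commute)
  hence "inner (v - u) (v - u) = D^2" by (simp add: power2_norm_eq_inner)
  hence ee: "inner e e = 1" using Dpos by (simp add: e_def power2_eq_square)
  have De: "(D / 2) *\<^sub>R e = (1/2) *\<^sub>R (v - u)" using Dpos by (simp add: e_def)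
  have uo: "u - ctr = - ((D / 2) *\<^sub>R e)" unfolding De ctr_def midpoint_def by (simp add: algebra_simps flip: scaleR_add_left)
  have vo: "v - ctr = (D / 2) *\<^sub>R e" unfolding De ctr_def midpoint_def by (simp add: algebra_simps flip: scaleR_add_left)
  define l where "l k = dist (c k) (c (Suc k))" for k
  define t where "t k = (1 / l k) *\<^sub>R (c (Suc k) - c k)" for k
  have lpos: "l k > 0" if "k < j" for k
  proof -
    have "c k \<noteq> c (Suc k)" using inj that jm unfolding inj_on_def
      by (metis lessThan_iff less_trans_Suc n_not_Suc_n order.strict_trans)
    thus ?thesis by (simp add: l_def)
  qed
  have dd: "inner (c (Suc k) - c k) (c (Suc k) - c k) = (l k)^2" for k
  proof -
    have "l k = norm (c (Suc k) - c k)" by (simp add: l_def dist_norm norm_minus_commute)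
    thus ?thesis by (simp add: power2_norm_eq_inner)
  qed
  have tt: "inner (t k) (t k) = 1" if "k < j" for k
    using lpos[OF that] dd[of k] by (simp add: t_def power2_eq_square)
  have lt: "l k = inner (c (Suc k) - c k) (t k)" if "k < j" for k
    using lpos[OF that] dd[of k] by (simp add: t_def power2_eq_square)
  define al where "al k = inner (t k) e" for k
  define be where "be k = - s * inner (t k) ep" for k
  define ps where "ps k = arcsin (be k)" for k
  have al_nn: "al k \<ge> 0" if "i \<le> k" "k < j" for k
  proof -
    have "inner (c (Suc k) - c k) (v - u) \<ge> 0"
      using proj_mono[where c=c and m=m and i=i and k=k and j=j, OF O] that jm unfolding u_def v_def by simp
    moreover have "al k = (1 / l k) * (1 / D) * inner (c (Suc k) - c k) (v - u)"
      by (simp add: al_def t_def e_def)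
    ultimately show ?thesis using lpos[of k] that Dpos by simp
  qed
  have te: "inner (t k) ep = - s * be k" for k
    using ss by (simp add: be_def algebra_simps)
  have unit: "(al k)^2 + (be k)^2 = 1" if "k < j" for k
  proof -
    have "(be k)^2 = (s * s) * (inner (t k) ep)^2" by (simp add: be_def power2_eq_square algebra_simps)
    thus ?thesis using decomp_norm[of "t k" e] tt[OF that] ee ss by (simp add: al_def ep_def)
  qed
  have beb: "-1 \<le> be k \<and> be k \<le> 1" if "k < j" for k
  proof -
    have "(be k)^2 \<le> 1" using unit[OF that] by (smt (verit) zero_le_power2)
    thus ?thesis using abs_square_le_1[of "be k"] by (simp add: abs_le_iff)
  qed
  have sinps: "sin (ps k) = be k" if "k < j" for k
    using beb[OF that] by (simp add: ps_def)
  have cosps: "cos (ps k) = al k" if "i \<le> k" "k < j" for k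
  proof -
    have "cos (ps k) = sqrt (1 - (be k)^2)" using beb[OF that(2)] by (simp add: ps_def cos_arcsin)
    also have "1 - (be k)^2 = (al k)^2" using unit[OF that(2)] by simp
    finally show ?thesis using al_nn[OF that] by simp
  qed
  have psb: "- (pi/2) \<le> ps k \<and> ps k \<le> pi/2" if "k < j" for k
    using arcsin_bounded beb[OF that] by (simp add: ps_def)
  have mono: "ps k \<le> ps (k - 1)" and chord: "norm (t (k - 1) - t k) \<le> ps (k - 1) - ps k"
    if "i < k" "k < j" for k
  proof -
    have k1: "k - 1 < k" "Suc k < m" "Suc (k - 1) = k" "i \<le> k - 1" "k - 1 < j" using that jm by auto
    have o1: "s * cross (c k - c (k - 1)) (c (Suc k) - c (k - 1)) > 0"
      using orient_base[OF E, of "k - 1" k] k1 by simp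
    have "cross (t (k - 1)) (t k) = (1 / l (k - 1)) * (1 / l k) * cross (c k - c (k - 1)) (c (Suc k) - c (k - 1))"
      unfolding t_def k1(3) cross_scale cross_shift[of "c k" "c (k - 1)" "c (Suc k)"] ..
    hence cr: "s * cross (t (k - 1)) (t k) > 0"
      using o1 lpos[of k] lpos[of "k - 1"] k1 that by (simp add: algebra_simps)
    have "cross (t (k - 1)) (t k) = al (k - 1) * (- s * be k) - (- s * be (k - 1)) * al k"
      using decomp_cross[of "t (k - 1)" e "t k"] ee te[of k] te[of "k - 1"]
      by (simp add: al_def ep_def)
    hence "s * cross (t (k - 1)) (t k) = s * (al (k - 1) * (- s * be k) - (- s * be (k - 1)) * al k)"
      by simp
    also have "\<dots> = (s * s) * (be (k - 1) * al k - al (k - 1) * be k)"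
      by (simp add: algebra_simps)
    also have "\<dots> = sin (ps (k - 1) - ps k)"
      using ss sinps[of k] sinps[of "k - 1"] cosps[of k] cosps[of "k - 1"] k1 that
      by (simp add: sin_diff)
    finally have sp: "sin (ps (k - 1) - ps k) > 0" using cr by simp
    show mono: "ps k \<le> ps (k - 1)"
    proof (rule ccontr)
      assume "\<not> ?thesis"
      hence "0 \<le> ps k - ps (k - 1)" "ps k - ps (k - 1) \<le> pi"
        using psb[of k] psb[of "k - 1"] k1 that by auto
      hence "sin (ps k - ps (k - 1)) \<ge> 0" by (rule sin_ge_zero)
      moreover have "sin (ps (k - 1) - ps k) = - sin (ps k - ps (k - 1))"
        by (metis minus_diff_eq sin_minus)
      ultimately show False using sp by simp
    qed
    define w where "w = t (k - 1) - t k"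
    have n1: "(norm w)^2 = (inner w e)^2 + (inner w ep)^2"
      using decomp_norm[of w e] ee by (simp add: ep_def power2_norm_eq_inner)
    have n2: "inner w e = cos (ps (k - 1)) - cos (ps k)"
      using cosps[of k] cosps[of "k - 1"] k1 that by (simp add: w_def al_def inner_diff_left)
    have n3: "inner w ep = s * (sin (ps k) - sin (ps (k - 1)))"
      using te[of k] te[of "k - 1"] sinps[of k] sinps[of "k - 1"] k1 that
      by (simp add: w_def inner_diff_left algebra_simps)
    have n4: "(s * x)^2 = x^2" for x using ss by (simp add: power2_eq_square algebra_simps)
    have n5: "(sin (ps k) - sin (ps (k - 1)))^2 = (sin (ps (k - 1)) - sin (ps k))^2"
      by (simp add: power2_commute)
    have sq: "(norm w)^2 \<le> (ps (k - 1) - ps k)^2"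
      using chord_arc[of "ps (k - 1)" "ps k"] unfolding n1 n2 n3 n4 n5 .
    have pos: "0 \<le> ps (k - 1) - ps k" using mono by simp
    have "norm w \<le> ps (k - 1) - ps k" by (rule power2_le_imp_le[OF sq pos])
    thus "norm (t (k - 1) - t k) \<le> ps (k - 1) - ps k" unfolding w_def .
  qed
  have near: "norm (c k - ctr) \<le> r" if "i < k" "k < j" for k
  proof -
    have "inner (u - c k) (v - c k) \<le> 0" using O[of i k j] that jm unfolding u_def v_def by simp
    hence "(norm (c k - ctr))^2 \<le> r^2"
      using mid_ident[of u "c k" v] unfolding ctr_def r_def D_def by (simp add: power_divide)
    moreover have "0 \<le> r" using Dpos unfolding r_def by simp
    ultimately show ?thesis by (rule power2_le_imp_le)
  qed
  have step: "inner (c k - ctr) (t (k - 1) - t k) \<le> r * (ps (k - 1) - ps k)" if "i < k" "k < j" for k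
  proof -
    have "inner (c k - ctr) (t (k - 1) - t k) \<le> norm (c k - ctr) * norm (t (k - 1) - t k)"
      by (rule norm_cauchy_schwarz)
    also have "\<dots> \<le> r * (ps (k - 1) - ps k)"
      using near[OF that] chord[OF that] Dpos unfolding r_def by (intro mult_mono) auto
    finally show ?thesis .
  qed
  have pot: "Suc i \<le> N \<longrightarrow> N \<le> j \<longrightarrow> (\<Sum>k\<in>{i..<N}. l k) \<le> inner (c N - ctr) (t (N - 1)) + r * al i + r * (ps i - ps (N - 1))" for N
  proof (induction N)
    case 0 then show ?case by simp
  next
    case (Suc n)
    show ?case
    proof (intro impI)
      assume a1: "Suc i \<le> Suc n" and a2: "Suc n \<le> j"
      show "(\<Sum>k\<in>{i..<Suc n}. l k) \<le> inner (c (Suc n) - ctr) (t (Suc n - 1)) + r * al i + r * (ps i - ps (Suc n - 1))"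
      proof (cases "n = i")
        case True
        have "l i = inner (c (Suc i) - ctr) (t i) - inner (u - ctr) (t i)"
          using lt[of i] ij unfolding u_def by (simp add: inner_diff_left)
        also have "inner (u - ctr) (t i) = - r * al i" unfolding uo r_def al_def
          by (simp add: inner_commute)
        finally show ?thesis using True by simp
      next
        case False
        hence ni: "i < n" "n < j" using a1 a2 by auto
        have IH: "(\<Sum>k\<in>{i..<n}. l k) \<le> inner (c n - ctr) (t (n - 1)) + r * al i + r * (ps i - ps (n - 1))"
          using Suc.IH ni by simp
        have "(\<Sum>k\<in>{i..<Suc n}. l k) = (\<Sum>k\<in>{i..<n}. l k) + l n" using ni by simp
        moreover have "l n = inner (c (Suc n) - ctr) (t n) - inner (c n - ctr) (t n)"
          using lt[of n] ni by (simp add: inner_diff_left)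
        moreover have "inner (c n - ctr) (t (n - 1)) - inner (c n - ctr) (t n) \<le> r * (ps (n - 1) - ps n)"
          using step[OF ni] by (simp add: inner_diff_right)
        ultimately show ?thesis using IH by (simp add: algebra_simps)
      qed
    qed
  qed
  have L: "subchain_length c i j \<le> inner (v - ctr) (t (j - 1)) + r * al i + r * (ps i - ps (j - 1))"
    using pot[of j] ij unfolding subchain_length_def l_def v_def by simp
  have vt: "inner (v - ctr) (t (j - 1)) = r * cos (ps (j - 1))"
    using cosps[of "j - 1"] ij unfolding vo r_def al_def by (simp add: inner_commute)
  have ai: "al i = cos (ps i)" using cosps[of i] ij by simp
  have b1: "cos (ps i) + ps i \<le> pi / 2"
  proof -
    have "cos (ps i) = sin (pi/2 - ps i)" by (simp add: cos_sin_eq)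
    also have "\<dots> \<le> pi/2 - ps i" using psb[of i] ij by (intro sin_x_le_x) simp
    finally show ?thesis by simp
  qed
  have b2: "cos (ps (j - 1)) - ps (j - 1) \<le> pi / 2"
  proof -
    have "cos (ps (j - 1)) = cos (- ps (j - 1))" by simp
    also have "\<dots> = sin (pi/2 - (- ps (j - 1)))" using cos_sin_eq[of "- ps (j - 1)"] by simp
    also have "\<dots> \<le> pi/2 - (- ps (j - 1))" using psb[of "j - 1"] ij by (intro sin_x_le_x) simp
    finally show ?thesis by simp
  qed
  have "subchain_length c i j \<le> r * ((cos (ps i) + ps i) + (cos (ps (j - 1)) - ps (j - 1)))"
    using L vt ai by (simp add: algebra_simps)
  also have "\<dots> \<le> r * (pi / 2 + pi / 2)"
    using b1 b2 Dpos unfolding r_def by (intro mult_left_mono) auto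
  finally show ?thesis unfolding r_def D_def u_def v_def by (simp add: mult.commute)
qed



theorem theorem6:
  fixes c :: "nat \<Rightarrow> real \<times> real" and m :: nat
  assumes "convex_chain c m"
    and "chain_set c m \<subseteq> diam_disk (c 0) (c (m - 1))"
  shows "stretch_factor c m \<le> pi / 2"
proof -
  from assms(1) have m2: "2 \<le> m" and inj: "inj_on c {..<m}" and
    "\<exists>s::real. (s = 1 \<or> s = -1) \<and> (\<forall>i<m. \<forall>j<m. j \<noteq> i \<and> j \<noteq> Suc i mod m \<longrightarrow>
           s * cross (c (Suc i mod m) - c i) (c j - c i) > 0)"
    unfolding convex_chain_def by auto
  then obtain s :: real where s1: "s = 1 \<or> s = -1" and
    E: "\<forall>i<m. \<forall>j<m. j \<noteq> i \<and> j \<noteq> Suc i mod m \<longrightarrow> s * cross (c (Suc i mod m) - c i) (c j - c i) > 0"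
    by blast
  have ss: "s * s = 1" using s1 by auto
  have D: "inner (c 0 - c k) (c (m - 1) - c k) \<le> 0" if "0 < k" "k < m - 1" for k
  proof -
    have "c k \<in> closed_segment (c k) (c (Suc k))" by simp
    hence "c k \<in> chain_set c m" unfolding chain_set_def using that by blast
    hence "c k \<in> diam_disk (c 0) (c (m - 1))" using assms(2) by blast
    hence "dist (midpoint (c 0) (c (m - 1))) (c k) \<le> dist (c 0) (c (m - 1)) / 2"
      unfolding diam_disk_def by simp
    hence "norm (c k - midpoint (c 0) (c (m - 1))) \<le> dist (c 0) (c (m - 1)) / 2"
      by (simp add: dist_norm norm_minus_commute)
    hence "(norm (c k - midpoint (c 0) (c (m - 1))))^2 \<le> (dist (c 0) (c (m - 1)) / 2)^2"
      by (intro power_mono) auto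
    thus ?thesis using mid_ident[of "c 0" "c k" "c (m - 1)"] by (simp add: power_divide)
  qed
  have O: "inner (c a - c k) (c b - c k) \<le> 0" if "a < k" "k < b" "b < m" for a k b
    using obtuse_all[OF E ss D] that by blast
  define S where "S = {t. \<forall>i j. i < j \<and> j < m \<longrightarrow> subchain_length c i j \<le> t * dist (c i) (c j)}"
  have inS: "pi / 2 \<in> S" unfolding S_def using main_bound[OF E ss inj O] by blast
  have bdd: "bdd_below S"
  proof (rule bdd_belowI)
    fix t assume "t \<in> S"
    hence le: "subchain_length c 0 (m - 1) \<le> t * dist (c 0) (c (m - 1))"
      unfolding S_def using m2 by auto
    have "c 0 \<noteq> c (m - 1)" using inj_on_eq_iff[OF inj, of 0 "m - 1"] m2 by simp
    hence dp: "dist (c 0) (c (m - 1)) > 0" by simp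
    have "subchain_length c 0 (m - 1) \<ge> 0" unfolding subchain_length_def by (rule sum_nonneg) simp
    hence "t * dist (c 0) (c (m - 1)) \<ge> 0" using le by linarith
    thus "0 \<le> t" using dp by (simp add: zero_le_mult_iff)
  qed
  show ?thesis unfolding stretch_factor_def S_def[symmetric] by (rule cInf_lower[OF inS bdd])
qed

end
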